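(* Suppose the validators who violate at least one of the slashing conditions I or II have total deposit strictly less than $\frac{1}{3}$ of the total deposit. Then no two conflicting checkpoints can both be finalized. Equivalently: if two conflicting checkpoints are both finalized, then validators holding at least $\frac13$ of the total deposit have violated slashing condition I or II.
   Context: Checkpoints form a rooted tree (the checkpoint tree) with root $r$. For a checkpoint $c$, its height $h(c)$ is the number of edges on the path from $c$ to $r$, so $h(r)=0$ and a child has height one more than its parent. Two checkpoints are conflicting if neither is an ancestor (or equal to, or a descendant) of the other. There is a fixed finite set of validators, each with a positive deposit; fractions of validators are always deposit-weighted. A vote is a signed message $\langle \nu, s, t, h(s), h(t)\rangle$ from validator $\nu$, where $s$ (source) and $t$ (target) are checkpoints and $s$ is a strict ancestor of $t$. A supermajority link $s\to t$ is an ordered pair of checkpoints such that validators holding at least $\frac23$ of the total deposit have published the vote with source $s$ and target $t$. A checkpoint $c$ is justified if $c=r$ or there is a supermajority link $c'\to c$ with $c'$ justified. A checkpoint $c$ is finalized if $c=r$, or $c$ is justified and there is a supermajority link $c\to c'$ where $c'$ is a direct child of $c$ in the checkpoint tree (so $h(c')=h(c)+1$). Slashing conditions: a validator $\nu$ violates a slashing condition if it publishes two distinct votes $\langle \nu,s_1,t_1,h(s_1),h(t_1)\rangle$ and $\langle \nu,s_2,t_2,h(s_2),h(t_2)\rangle$ such that either (I) $h(t_1)=h(t_2)$, or (II) $h(s_1)<h(s_2)<h(t_2)<h(t_1)$. *)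

theory Defs
  imports Complex_Main
begin

definition checkpoint_tree :: "('c \<Rightarrow> 'c) \<Rightarrow> 'c \<Rightarrow> bool" where
  "checkpoint_tree par r \<longleftrightarrow> par r = r \<and> (\<forall>c. \<exists>n. (par ^^ n) c = r)"

definition anc :: "('c \<Rightarrow> 'c) \<Rightarrow> 'c \<Rightarrow> 'c \<Rightarrow> bool" where
  "anc par a c \<longleftrightarrow> (\<exists>n. (par ^^ n) c = a)"

definition strict_anc :: "('c \<Rightarrow> 'c) \<Rightarrow> 'c \<Rightarrow> 'c \<Rightarrow> bool" where
  "strict_anc par a c \<longleftrightarrow> anc par a c \<and> a \<noteq> c"

definition height :: "('c \<Rightarrow> 'c) \<Rightarrow> 'c \<Rightarrow> 'c \<Rightarrow> nat" where
  "height par r c = (LEAST n. (par ^^ n) c = r)"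

definition is_child :: "('c \<Rightarrow> 'c) \<Rightarrow> 'c \<Rightarrow> 'c \<Rightarrow> 'c \<Rightarrow> bool" where
  "is_child par r c c' \<longleftrightarrow> c' \<noteq> r \<and> par c' = c"

definition conflicting :: "('c \<Rightarrow> 'c) \<Rightarrow> 'c \<Rightarrow> 'c \<Rightarrow> bool" where
  "conflicting par a b \<longleftrightarrow> \<not> anc par a b \<and> \<not> anc par b a"

(* Votes: a set of triples (validator, source, target); the heights in the message
   are determined by source and target. *)
definition well_formed_votes ::
  "('c \<Rightarrow> 'c) \<Rightarrow> 'v set \<Rightarrow> ('v \<times> 'c \<times> 'c) set \<Rightarrow> bool" where
  "well_formed_votes par V votes \<longleftrightarrow>
     (\<forall>(v, s, t) \<in> votes. v \<in> V \<and> strict_anc par s t)"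

definition sm_link ::
  "'v set \<Rightarrow> ('v \<Rightarrow> real) \<Rightarrow> ('v \<times> 'c \<times> 'c) set \<Rightarrow> 'c \<Rightarrow> 'c \<Rightarrow> bool" where
  "sm_link V w votes s t \<longleftrightarrow>
     (\<Sum>v \<in> {v \<in> V. (v, s, t) \<in> votes}. w v) \<ge> 2/3 * (\<Sum>v \<in> V. w v)"

inductive justified ::
  "'c \<Rightarrow> 'v set \<Rightarrow> ('v \<Rightarrow> real) \<Rightarrow> ('v \<times> 'c \<times> 'c) set \<Rightarrow> 'c \<Rightarrow> bool"
  for r V w votes where
  root: "justified r V w votes r"
| step: "justified r V w votes c' \<Longrightarrow> sm_link V w votes c' c \<Longrightarrow> justified r V w votes c"

definition finalized ::
  "('c \<Rightarrow> 'c) \<Rightarrow> 'c \<Rightarrow> 'v set \<Rightarrow> ('v \<Rightarrow> real) \<Rightarrow> ('v \<times> 'c \<times> 'c) set \<Rightarrow> 'c \<Rightarrow> bool" where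
  "finalized par r V w votes c \<longleftrightarrow>
     c = r \<or> (justified r V w votes c \<and>
               (\<exists>c'. is_child par r c c' \<and> sm_link V w votes c c'))"

definition slashed ::
  "('c \<Rightarrow> 'c) \<Rightarrow> 'c \<Rightarrow> ('v \<times> 'c \<times> 'c) set \<Rightarrow> 'v \<Rightarrow> bool" where
  "slashed par r votes v \<longleftrightarrow>
     (\<exists>s1 t1 s2 t2. (v, s1, t1) \<in> votes \<and> (v, s2, t2) \<in> votes \<and> (s1, t1) \<noteq> (s2, t2) \<and>
        (height par r t1 = height par r t2 \<or>
         (height par r s1 < height par r s2 \<and> height par r s2 < height par r t2 \<and>
          height par r t2 < height par r t1)))"

end

theory Submission
  imports Defs
begin

lemma funpow_r:
  assumes "par r = r" shows "(par ^^ k) r = r"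
  using assms by (induction k) auto

lemma anc_height:
  assumes tree: "checkpoint_tree par r" and "anc par a c"
  shows "\<exists>n. (par ^^ n) c = a \<and> height par r c = height par r a + n"
proof -
  from assms(2) obtain n where n: "(par ^^ n) c = a" unfolding anc_def by auto
  have pr: "par r = r" using tree unfolding checkpoint_tree_def by auto
  define m where "m = height par r c"
  have ex: "\<And>x. \<exists>k. (par ^^ k) x = r" using tree unfolding checkpoint_tree_def by auto
  have hm: "(par ^^ m) c = r" unfolding m_def height_def using ex by (rule LeastI_ex)
  have minm: "\<And>j. (par ^^ j) c = r \<Longrightarrow> m \<le> j" unfolding m_def height_def by (rule Least_le)
  show ?thesis
  proof (cases "n \<le> m")
    case True
    have "(par ^^ (m - n)) a = r"
      using hm n True by (metis funpow_add le_add_diff_inverse2 o_apply)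
    moreover have "\<And>j. (par ^^ j) a = r \<Longrightarrow> m - n \<le> j"
    proof -
      fix j assume "(par ^^ j) a = r"
      hence "(par ^^ (j + n)) c = r" using n by (simp add: funpow_add)
      hence "m \<le> j + n" by (rule minm)
      thus "m - n \<le> j" by simp
    qed
    ultimately have "height par r a = m - n" unfolding height_def
      by (intro Least_equality) auto
    thus ?thesis using n True m_def by auto
  next
    case False
    have "a = (par ^^ (n - m)) ((par ^^ m) c)"
      using n False by (metis funpow_add le_add_diff_inverse2 nat_le_linear o_apply)
    hence "a = r" using hm funpow_r[of par r, OF pr] by simp
    moreover have "height par r r = 0" unfolding height_def by (intro Least_equality) auto
    ultimately show ?thesis using hm m_def by auto
  qed
qed

lemma strict_anc_height:
  assumes "checkpoint_tree par r" "strict_anc par s t"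
  shows "height par r s < height par r t"
proof -
  obtain n where "(par ^^ n) t = s" "height par r t = height par r s + n"
    using anc_height[OF assms(1), of s t] assms(2) unfolding strict_anc_def by auto
  moreover have "s \<noteq> t" using assms(2) unfolding strict_anc_def by simp
  ultimately have "n \<noteq> 0" by (metis funpow_0)
  thus ?thesis using \<open>height par r t = height par r s + n\<close> by simp
qed

lemma anc_eq_height:
  assumes "checkpoint_tree par r" "anc par a c" "height par r a = height par r c"
  shows "a = c"
  using anc_height[OF assms(1,2)] assms(3) by auto

lemma anc_trans:
  "anc par a b \<Longrightarrow> anc par b c \<Longrightarrow> anc par a c"
  unfolding anc_def by (metis funpow_add o_apply)

lemma anc_root:
  assumes "checkpoint_tree par r" shows "anc par r c"
  using assms unfolding checkpoint_tree_def anc_def by auto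

lemma height_root_zero:
  assumes "checkpoint_tree par r" "height par r c = 0" shows "c = r"
proof -
  have ex: "\<exists>k. (par ^^ k) c = r" using assms(1) unfolding checkpoint_tree_def by auto
  have "(par ^^ height par r c) c = r" unfolding height_def using ex by (rule LeastI_ex)
  thus ?thesis using assms(2) by simp
qed

lemma child_height:
  assumes tree: "checkpoint_tree par r" and "is_child par r c c'"
  shows "height par r c' = height par r c + 1"
proof -
  have pc: "par c' = c" "c' \<noteq> r" using assms(2) unfolding is_child_def by auto
  have ex: "\<And>x. \<exists>k. (par ^^ k) x = r" using tree unfolding checkpoint_tree_def by auto
  have hc: "(par ^^ height par r c) c = r" unfolding height_def using ex by (rule LeastI_ex)
  have "(par ^^ (height par r c + 1)) c' = r"
    using hc pc by (simp add: funpow_Suc_right del: funpow.simps)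
  hence le: "height par r c' \<le> height par r c + 1" unfolding height_def by (rule Least_le)
  have "c \<noteq> c'"
  proof
    assume "c = c'"
    hence fx: "par c' = c'" using pc by simp
    obtain k where "(par ^^ k) c' = r" using ex[of c'] by blast
    moreover have "(par ^^ k) c' = c'" using funpow_r[of par c' k] fx by simp
    ultimately show False using pc by simp
  qed
  hence "strict_anc par c c'" unfolding strict_anc_def anc_def
  proof (intro conjI exI)
    show "(par ^^ 1) c' = c" using pc by simp
  qed
  hence "height par r c < height par r c'" by (rule strict_anc_height[OF tree])
  thus ?thesis using le by simp
qed

definition slash_pair where
  "slash_pair par r V w votes \<longleftrightarrow> (\<exists>s1 t1 s2 t2. sm_link V w votes s1 t1 \<and> sm_link V w votes s2 t2 \<and>
     (s1, t1) \<noteq> (s2, t2) \<and>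
        (height par r t1 = height par r t2 \<or>
         (height par r s1 < height par r s2 \<and> height par r s2 < height par r t2 \<and>
          height par r t2 < height par r t1)))"

lemma slash_I:
  assumes "sm_link V w votes s1 t1" "sm_link V w votes s2 t2" "(s1, t1) \<noteq> (s2, t2)"
    "height par r t1 = height par r t2"
  shows "slash_pair par r V w votes"
  unfolding slash_pair_def using assms by blast

lemma slash_II:
  assumes "sm_link V w votes s1 t1" "sm_link V w votes s2 t2" "(s1, t1) \<noteq> (s2, t2)"
    "height par r s1 < height par r s2" "height par r s2 < height par r t2"
    "height par r t2 < height par r t1"
  shows "slash_pair par r V w votes"
  unfolding slash_pair_def using assms by blast

lemma link_anc:
  assumes wf: "well_formed_votes par V votes" and T: "(\<Sum>v \<in> V. w v) > 0"
    and fin: "finite V" and l: "sm_link V w votes s t"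
  shows "strict_anc par s t"
proof -
  have "{v \<in> V. (v, s, t) \<in> votes} \<noteq> {}"
  proof
    assume e: "{v \<in> V. (v, s, t) \<in> votes} = {}"
    have "(\<Sum>v \<in> {v \<in> V. (v, s, t) \<in> votes}. w v) = 0" by (simp only: e sum.empty)
    thus False using l T unfolding sm_link_def by linarith
  qed
  then obtain v where "(v, s, t) \<in> votes" by auto
  thus ?thesis using wf unfolding well_formed_votes_def by auto
qed

lemma main:
  assumes tree: "checkpoint_tree par r"
    and wf: "well_formed_votes par V votes" and T: "(\<Sum>v \<in> V. w v) > 0" and fin: "finite V"
    and ja: "justified r V w votes a" and x: "sm_link V w votes x a"
    and a': "is_child par r a a'" "sm_link V w votes a a'" and ar: "a \<noteq> r"
    and jb: "justified r V w votes b"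
  shows "height par r a \<le> height par r b \<Longrightarrow> \<not> anc par a b \<Longrightarrow> slash_pair par r V w votes"
  using jb
proof (induction b rule: justified.induct)
  case root
  have "height par r r = 0" unfolding height_def by (intro Least_equality) auto
  then show ?case using height_root_zero[OF tree, of a] ar root by simp
next
  case (step c' c)
  have sa: "strict_anc par c' c" using link_anc[OF wf T fin step.hyps(2)] .
  have ha': "height par r a' = height par r a + 1" using child_height[OF tree a'(1)] .
  have hlt: "height par r c' < height par r c" using strict_anc_height[OF tree sa] .
  show ?case
  proof (cases "height par r a \<le> height par r c'")
    case True
    have "anc par c' c" using sa unfolding strict_anc_def by simp
    hence "\<not> anc par a c'" using step.prems(2) anc_trans[of par a c' c] by auto
    then show ?thesis using step.IH True by simp
  next
    case False
    show ?thesis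
    proof (cases "height par r c = height par r a")
      case True
      have "c \<noteq> a" using step.prems(2) unfolding anc_def by (metis funpow_0)
      then show ?thesis using slash_I[OF step.hyps(2) x] True by simp
    next
      case F2: False
      show ?thesis
      proof (cases "height par r c = height par r a + 1")
        case True
        have "c' \<noteq> a" using False by auto
        then show ?thesis using slash_I[OF step.hyps(2) a'(2)] True ha' by simp
      next
        case False
        have "height par r c' < height par r a" "height par r a < height par r a'"
          "height par r a' < height par r c"
          using \<open>\<not> height par r a \<le> height par r c'\<close> ha' F2 False step.prems(1) by auto
        moreover have "(c', c) \<noteq> (a, a')" using calculation by auto
        ultimately show ?thesis using slash_II[OF step.hyps(2) a'(2)] by simp
      qed
    qed
  qed
qed

lemma main2:
  assumes tree: "checkpoint_tree par r"
    and wf: "well_formed_votes par V votes" and T: "(\<Sum>v \<in> V. w v) > 0" and fin: "finite V"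
    and fa: "finalized par r V w votes a" and ar: "a \<noteq> r"
    and fb: "finalized par r V w votes b"
    and h: "height par r a \<le> height par r b" and na: "\<not> anc par a b"
  shows "slash_pair par r V w votes"
proof -
  have ja: "justified r V w votes a" and "\<exists>a'. is_child par r a a' \<and> sm_link V w votes a a'"
    using fa ar unfolding finalized_def by auto
  then obtain a' where a': "is_child par r a a'" "sm_link V w votes a a'" by auto
  obtain x where x: "sm_link V w votes x a" using ja ar by (cases rule: justified.cases) auto
  have jb: "justified r V w votes b" using fb unfolding finalized_def by (auto intro: justified.root)
  show ?thesis using main[OF tree wf T fin ja x a' ar jb h na] .
qed

theorem theorem1:
  fixes par :: "'c \<Rightarrow> 'c" and r :: 'c
    and V :: "'v set" and w :: "'v \<Rightarrow> real"
    and votes :: "('v \<times> 'c \<times> 'c) set"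
    and a b :: 'c
  assumes tree: "checkpoint_tree par r"
    and finV: "finite V"
    and pos: "\<forall>v \<in> V. w v > 0"
    and wf: "well_formed_votes par V votes"
    and few_slashed:
      "(\<Sum>v \<in> {v \<in> V. slashed par r votes v}. w v) < 1/3 * (\<Sum>v \<in> V. w v)"
    and confl: "conflicting par a b"
  shows "\<not> (finalized par r V w votes a \<and> finalized par r V w votes b)"
proof
  assume fin: "finalized par r V w votes a \<and> finalized par r V w votes b"
  let ?T = "\<Sum>v \<in> V. w v"
  have nn: "0 \<le> (\<Sum>v \<in> {v \<in> V. slashed par r votes v}. w v)"
    using pos by (intro sum_nonneg) auto
  hence T: "?T > 0" using few_slashed by linarith
  have ar: "a \<noteq> r" and br: "b \<noteq> r" using confl anc_root[OF tree] unfolding conflicting_def by auto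
  have sp: "slash_pair par r V w votes"
  proof (cases "height par r a \<le> height par r b")
    case True
    then show ?thesis using main2[OF tree wf T finV _ ar _ True] fin confl
      unfolding conflicting_def by blast
  next
    case False
    then show ?thesis using main2[OF tree wf T finV _ br _, of a] fin confl
      unfolding conflicting_def by auto
  qed
  then obtain s1 t1 s2 t2 where l1: "sm_link V w votes s1 t1" and l2: "sm_link V w votes s2 t2"
    and d: "(s1, t1) \<noteq> (s2, t2)" and c: "(height par r t1 = height par r t2 \<or>
         (height par r s1 < height par r s2 \<and> height par r s2 < height par r t2 \<and>
          height par r t2 < height par r t1))"
    unfolding slash_pair_def by blast
  define A where "A = {v \<in> V. (v, s1, t1) \<in> votes}"
  define B where "B = {v \<in> V. (v, s2, t2) \<in> votes}"
  have fA: "finite A" "finite B" using finV unfolding A_def B_def by auto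
  have "sum w (A \<union> B) + sum w (A \<inter> B) = sum w A + sum w B"
    using fA by (rule sum.union_inter)
  moreover have "sum w (A \<union> B) \<le> ?T"
    using pos finV unfolding A_def B_def by (intro sum_mono2) auto
  moreover have "sum w A \<ge> 2/3 * ?T" "sum w B \<ge> 2/3 * ?T"
    using l1 l2 unfolding sm_link_def A_def B_def by auto
  moreover have "sum w (A \<inter> B) \<le> (\<Sum>v \<in> {v \<in> V. slashed par r votes v}. w v)"
  proof (intro sum_mono2)
    show "finite {v \<in> V. slashed par r votes v}" using finV by auto
    show "A \<inter> B \<subseteq> {v \<in> V. slashed par r votes v}"
      unfolding A_def B_def slashed_def using d c by blast
    show "\<And>b. b \<in> {v \<in> V. slashed par r votes v} - A \<inter> B \<Longrightarrow> 0 \<le> w b"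
      using pos by auto
  qed
  ultimately show False using few_slashed by linarith
qed

end
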